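(* Let $\pi$ be a $k$-permutation and $\alpha,\beta\in(0,1)$. Then $$\lim_{n\to\infty} n^3\,\frac{\partial}{\partial x_{\lfloor\alpha n\rfloor,\lfloor\beta n\rfloor}}h_{\pi,n}(0,\dots,0)=\lim_{n\to\infty}\frac{k!}{n^{2k-4}}\sum_{\substack{f,g:[k]\to[n]\\ \text{strictly increasing}}}\ \sum_{m\in[k]}B^{\lfloor\alpha n\rfloor,\lfloor\beta n\rfloor}_{f(m),\,g(\pi(m))}$$ whenever either of the two limits exists (in which case both exist).
   Context: A $k$-permutation is a bijection of $[k]=\{1,\dots,k\}$. Fix $n\ge2$. For $k',l\in[n-1]$ let $B^{k',l}\in\mathbb{R}^{n\times n}$ have entries $+1$ at $(k',l)$ and $(k'+1,l+1)$, $-1$ at $(k'+1,l)$ and $(k',l+1)$, and $0$ elsewhere. Let $J$ be the $n\times n$ matrix with all entries $1/n$, and for $x=(x_{i,j})_{i,j\in[n-1]}$ let $J^x=J+\sum_{i,j\in[n-1]}x_{i,j}B^{i,j}$. For a $k$-permutation $\pi$, $h_{\pi,n}(x)$ is the density of $\pi$ in the step permuton of $J^x$, which is the polynomial $h_{\pi,n}(x)=\frac{k!}{n^k}\sum_{f,g}\frac{1}{\prod_{i\in[n]}|f^{-1}(i)|!\,|g^{-1}(i)|!}\prod_{m\in[k]}(J^x)_{f(m),g(\pi(m))}$, the sum over all non-decreasing functions $f,g:[k]\to[n]$. The sequences in $n$ are considered for $n$ large enough that $\lfloor\alpha n\rfloor,\lfloor\beta n\rfloor\in[n-1]$. *)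

theory Defs
  imports "HOL-Analysis.Analysis"
begin

definition Bmat :: "nat \<Rightarrow> nat \<Rightarrow> nat \<Rightarrow> nat \<Rightarrow> real" where
  "Bmat k' l i j =
     (if (i = k' \<and> j = l) \<or> (i = k' + 1 \<and> j = l + 1) then 1
      else if (i = k' + 1 \<and> j = l) \<or> (i = k' \<and> j = l + 1) then -1
      else 0)"

definition Jx :: "nat \<Rightarrow> (nat \<Rightarrow> nat \<Rightarrow> real) \<Rightarrow> nat \<Rightarrow> nat \<Rightarrow> real" where
  "Jx n x i j = 1 / real n + (\<Sum>a\<in>{1..n-1}. \<Sum>b\<in>{1..n-1}. x a b * Bmat a b i j)"

definition nondec_funs :: "nat \<Rightarrow> nat \<Rightarrow> (nat \<Rightarrow> nat) set" where
  "nondec_funs k n = {f \<in> {1..k} \<rightarrow>\<^sub>E {1..n}. mono_on {1..k} f}"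

definition strinc_funs :: "nat \<Rightarrow> nat \<Rightarrow> (nat \<Rightarrow> nat) set" where
  "strinc_funs k n = {f \<in> {1..k} \<rightarrow>\<^sub>E {1..n}. strict_mono_on {1..k} f}"

text \<open>Density h_{pi,n}(x) of the k-permutation pi in the step permuton of J^x.\<close>
definition hdens :: "(nat \<Rightarrow> nat) \<Rightarrow> nat \<Rightarrow> nat \<Rightarrow> (nat \<Rightarrow> nat \<Rightarrow> real) \<Rightarrow> real" where
  "hdens \<pi> k n x = fact k / real n ^ k *
     (\<Sum>f\<in>nondec_funs k n. \<Sum>g\<in>nondec_funs k n.
        (1 / (\<Prod>i\<in>{1..n}. fact (card {m\<in>{1..k}. f m = i}) * fact (card {m\<in>{1..k}. g m = i})))
        * (\<Prod>m\<in>{1..k}. Jx n x (f m) (g (\<pi> m))))"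

definition dh0 :: "(nat \<Rightarrow> nat) \<Rightarrow> nat \<Rightarrow> nat \<Rightarrow> nat \<Rightarrow> nat \<Rightarrow> real" where
  "dh0 \<pi> k n a b = deriv (\<lambda>t. hdens \<pi> k n (\<lambda>i j. if i = a \<and> j = b then t else 0)) 0"

end

theory Submission
  imports Defs
begin


lemma card_det_bound:
  fixes F :: "(nat \<Rightarrow> nat) set"
  assumes F: "F \<subseteq> PiE K (\<lambda>_. N)" and fK: "finite K" and fN: "finite N" and D: "D \<subseteq> K"
    and det: "\<And>f g. f\<in>F \<Longrightarrow> g\<in>F \<Longrightarrow> (\<forall>x\<in>K-D. f x = g x) \<Longrightarrow> f = g"
  shows "card F \<le> card N ^ (card K - card D)"
proof -
  have inj: "inj_on (\<lambda>f. restrict f (K-D)) F"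
  proof (rule inj_onI)
    fix f g assume "f \<in> F" "g \<in> F" "restrict f (K-D) = restrict g (K-D)"
    then show "f = g" using det by (metis restrict_apply')
  qed
  have sub: "(\<lambda>f. restrict f (K-D)) ` F \<subseteq> PiE (K-D) (\<lambda>_. N)" 
  proof
    fix h assume "h \<in> (\<lambda>f. restrict f (K-D)) ` F"
    then obtain f where "f \<in> F" "h = restrict f (K-D)" by auto
    moreover have "\<forall>i\<in>K-D. f i \<in> N" using F \<open>f \<in> F\<close> by (auto simp: PiE_iff)
    ultimately show "h \<in> PiE (K-D) (\<lambda>_. N)" by (simp add: restrict_PiE_iff)
  qed
  have "card F \<le> card (PiE (K-D) (\<lambda>_. N))"
    by (rule card_inj_on_le[OF inj sub]) (simp add: fK fN finite_PiE)
  also have "\<dots> = card N ^ card (K - D)" using fK by (simp add: card_PiE)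
  also have "card (K-D) = card K - card D" using D fK by (meson card_Diff_subset finite_subset)
  finally show ?thesis .
qed

lemma pow_bound_from:
  fixes n c d k :: nat
  assumes "c \<le> n ^ (k - d)" "d \<le> k"
  shows "n ^ d * c \<le> n ^ k"
proof -
  have "n ^ d * c \<le> n ^ d * n ^ (k - d)" using assms(1) by simp
  also have "\<dots> = n ^ k" using assms(2) by (simp add: power_add[symmetric])
  finally show ?thesis .
qed

lemma two_pins:
  fixes n k m p c v :: nat
  assumes "m \<in> {1..k}" "p \<in> {1..k}" "c \<noteq> v"
  shows "n ^ 2 * card {f\<in>PiE {1..k} (\<lambda>_. {1..n}). f m = c \<and> f p = v} \<le> n ^ k"
proof (cases "m = p")
  case True
  then have "{f\<in>PiE {1..k} (\<lambda>_. {1..n}). f m = c \<and> f p = v} = {}" using assms(3) True by blast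
  then show ?thesis by (metis card.empty le0 mult_0_right)
next
  case False
  let ?F = "{f\<in>PiE {1..k} (\<lambda>_. {1..n}). f m = c \<and> f p = v}"
  have cD: "card {m,p} = 2" using False by simp
  have "card ?F \<le> card {1..n} ^ (card {1..k} - card {m,p})"
  proof (rule card_det_bound[where K="{1..k}" and N="{1..n}"])
    fix f g assume "f \<in> ?F" "g \<in> ?F" "\<forall>x\<in>{1..k}-{m,p}. f x = g x"
    then show "f = g" by (intro PiE_ext[of f "{1..k}" "\<lambda>_. {1..n}"]) auto
  qed (use assms in auto)
  then have "card ?F \<le> n ^ (k - 2)" using cD by simp
  moreover have "2 \<le> k"
  proof -
    have "{m,p} \<subseteq> {1..k}" using assms by auto
    then have "card {m,p} \<le> card {1..k}" by (intro card_mono) auto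
    then show ?thesis using cD by simp
  qed
  ultimately show ?thesis by (rule pow_bound_from)
qed

lemma three_pins:
  fixes n k m p c v j :: nat
  assumes "m \<in> {1..k}" "p \<in> {1..k}" "c \<noteq> v" "j \<in> {1..k}" "Suc j \<in> {1..k}"
  shows "n ^ 3 * card {f\<in>PiE {1..k} (\<lambda>_. {1..n}). f m = c \<and> f p = v \<and> f j = f (Suc j)} \<le> n ^ k"
proof -
  let ?F = "{f\<in>PiE {1..k} (\<lambda>_. {1..n}). f m = c \<and> f p = v \<and> f j = f (Suc j)}"
  show ?thesis
  proof (cases "m = p \<or> (j = m \<and> Suc j = p) \<or> (j = p \<and> Suc j = m)")
    case True
    then have "?F = {}" using assms(3) by fastforce
    then show ?thesis by (metis card.empty le0 mult_0_right)
  next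
    case False
    obtain q q' where qq: "q \<notin> {m,p}" "q' \<noteq> q" "q \<in> {1..k}" "q' \<in> {1..k}"
      "\<And>f. f \<in> ?F \<Longrightarrow> f q = f q'"
    proof (cases "Suc j \<in> {m,p}")
      case True
      then have "j \<notin> {m,p}" using False by auto
      then show ?thesis using that[of j "Suc j"] assms by auto
    next
      case False
      then show ?thesis using that[of "Suc j" j] assms by auto
    qed
    have mp: "m \<noteq> p" using False by auto
    have cD: "card {m,p,q} = 3" using qq(1) mp by auto
    have sub: "{m,p,q} \<subseteq> {1..k}" using assms qq by auto
    have "card ?F \<le> card {1..n} ^ (card {1..k} - card {m,p,q})"
    proof (rule card_det_bound[where K="{1..k}" and N="{1..n}"])
      fix f g assume fg: "f \<in> ?F" "g \<in> ?F" and agr: "\<forall>x\<in>{1..k}-{m,p,q}. f x = g x"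
      have q': "f q' = g q'"
      proof (cases "q' \<in> {m,p}")
        case True then show ?thesis using fg by auto
      next
        case False then show ?thesis using agr qq by auto
      qed
      have "f q = g q" using qq(5)[OF fg(1)] qq(5)[OF fg(2)] q' by simp
      then show "f = g" using fg agr by (intro PiE_ext[of f "{1..k}" "\<lambda>_. {1..n}"]) auto
    qed (use sub in auto)
    then have "card ?F \<le> n ^ (k - 3)" using cD by simp
    moreover have "3 \<le> k"
    proof -
      have "card {m,p,q} \<le> card {1..k}" using sub by (intro card_mono) auto
      then show ?thesis using cD by simp
    qed
    ultimately show ?thesis by (rule pow_bound_from)
  qed
qed



definition wt :: "nat \<Rightarrow> nat \<Rightarrow> (nat \<Rightarrow> nat) \<Rightarrow> real" where
  "wt k n f = (\<Prod>i\<in>{1..n}. fact (card {m\<in>{1..k}. f m = i}))"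
definition sh :: "nat \<Rightarrow> nat \<Rightarrow> nat" where "sh c x = (if c \<le> x then Suc x else x)"
definition ush :: "nat \<Rightarrow> nat \<Rightarrow> nat" where "ush c y = (if c < y then y - 1 else y)"
definition Tsh :: "nat \<Rightarrow> nat \<Rightarrow> (nat \<Rightarrow> nat) \<Rightarrow> (nat \<Rightarrow> nat)" where
  "Tsh k c f = restrict (\<lambda>j. sh c (f j)) {1..k}"
definition Ush :: "nat \<Rightarrow> nat \<Rightarrow> (nat \<Rightarrow> nat) \<Rightarrow> (nat \<Rightarrow> nat)" where
  "Ush k c f = restrict (\<lambda>j. ush c (f j)) {1..k}"
definition uu :: "nat \<Rightarrow> nat \<Rightarrow> real" where
  "uu c x = (if x = c then 1 else if x = Suc c then -1 else 0)"

lemma inj_sh: "inj (sh c)" by (auto simp: inj_on_def sh_def split: if_splits)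

lemma wt_image:
  assumes "f ` {1..k} \<subseteq> {1..n}"
  shows "wt k n f = (\<Prod>i\<in>f ` {1..k}. fact (card {m\<in>{1..k}. f m = i}))"
  unfolding wt_def
proof (rule prod.mono_neutral_right)
  show "\<forall>i\<in>{1..n} - f ` {1..k}. fact (card {m\<in>{1..k}. f m = i}) = (1::real)"
  proof
    fix i assume "i \<in> {1..n} - f ` {1..k}"
    then have "{m\<in>{1..k}. f m = i} = {}" by auto
    then show "fact (card {m\<in>{1..k}. f m = i}) = (1::real)" by (metis card.empty fact_0)
  qed
qed (use assms in auto)

lemma wt_Tsh:
  assumes f: "f \<in> PiE {1..k} (\<lambda>_. {1..n})" and nn: "n \<notin> f ` {1..k}"
  shows "wt k n (Tsh k c f) = wt k n f"
proof -
  have img: "Tsh k c f ` {1..k} = sh c ` (f ` {1..k})" by (auto simp: Tsh_def)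
  have fsub: "f ` {1..k} \<subseteq> {1..n}" using f by auto
  have sub: "Tsh k c f ` {1..k} \<subseteq> {1..n}"
  proof
    fix y assume "y \<in> Tsh k c f ` {1..k}"
    then obtain j where j: "j \<in> {1..k}" "y = sh c (f j)" by (auto simp: Tsh_def)
    have "f j \<in> {1..n}" "f j \<noteq> n" using f nn j by auto
    then show "y \<in> {1..n}" using j by (simp add: sh_def)
  qed
  have "wt k n (Tsh k c f) = (\<Prod>i\<in>sh c ` (f ` {1..k}). fact (card {m\<in>{1..k}. Tsh k c f m = i}))"
    using wt_image[OF sub] img by simp
  also have "\<dots> = (\<Prod>x\<in>f ` {1..k}. fact (card {m\<in>{1..k}. Tsh k c f m = sh c x}))"
    by (subst prod.reindex) (auto intro: inj_on_subset[OF inj_sh])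
  also have "\<dots> = (\<Prod>x\<in>f ` {1..k}. fact (card {m\<in>{1..k}. f m = x}))"
  proof (rule prod.cong[OF refl])
    fix x
    have "{m\<in>{1..k}. Tsh k c f m = sh c x} = {m\<in>{1..k}. f m = x}"
      by (auto simp: Tsh_def sh_def split: if_splits)
    then show "fact (card {m\<in>{1..k}. Tsh k c f m = sh c x}) = (fact (card {m\<in>{1..k}. f m = x}) :: real)"
      by simp
  qed
  also have "\<dots> = wt k n f" by (rule wt_image[OF fsub, symmetric])
  finally show ?thesis .
qed

lemma inj_Tsh:
  shows "inj_on (Tsh k c f) {1..k} \<longleftrightarrow> inj_on f {1..k}"
proof -
  have "inj_on (Tsh k c f) {1..k} \<longleftrightarrow> inj_on (\<lambda>x. sh c (f x)) {1..k}"
    by (rule inj_on_cong) (simp add: Tsh_def)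
  also have "\<dots> \<longleftrightarrow> inj_on f {1..k}"
    by (simp add: inj_on_def inj_eq[OF inj_sh])
  finally show ?thesis .
qed

lemma shift_bij:
  assumes c: "1 \<le> c" "c < n" and m: "m \<in> {1..k}"
  shows "bij_betw (Tsh k c)
     {f\<in>nondec_funs k n. f m = c \<and> n \<notin> f ` {1..k}}
     {f\<in>nondec_funs k n. f m = Suc c \<and> c \<notin> f ` {1..k}}"
proof (rule bij_betw_byWitness[where f'="Ush k c"])
  show "\<forall>f\<in>{f\<in>nondec_funs k n. f m = c \<and> n \<notin> f ` {1..k}}. Ush k c (Tsh k c f) = f"
  proof
    fix f assume "f \<in> {f\<in>nondec_funs k n. f m = c \<and> n \<notin> f ` {1..k}}"
    then have "f \<in> PiE {1..k} (\<lambda>_. {1..n})" by (auto simp: nondec_funs_def)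
    then have "f \<in> extensional {1..k}" by (simp add: PiE_iff)
    then show "Ush k c (Tsh k c f) = f"
      by (rule extensionalityI[OF _ _, rotated]) (auto simp: Ush_def Tsh_def sh_def ush_def)
  qed
  show "\<forall>f\<in>{f\<in>nondec_funs k n. f m = Suc c \<and> c \<notin> f ` {1..k}}. Tsh k c (Ush k c f) = f"
  proof
    fix f assume f: "f \<in> {f\<in>nondec_funs k n. f m = Suc c \<and> c \<notin> f ` {1..k}}"
    then have "f \<in> PiE {1..k} (\<lambda>_. {1..n})" by (auto simp: nondec_funs_def)
    moreover have fc: "\<And>j. j \<in> {1..k} \<Longrightarrow> f j \<noteq> c" using f by auto
    moreover have "\<And>j. j \<in> {1..k} \<Longrightarrow> Tsh k c (Ush k c f) j = f j"
    proof -
      fix j assume j: "j \<in> {1..k}"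
      have "f j \<noteq> c" by (rule fc[OF j])
      then show "Tsh k c (Ush k c f) j = f j" using j by (auto simp: Ush_def Tsh_def sh_def ush_def)
    qed
    ultimately show "Tsh k c (Ush k c f) = f"
      by (intro extensionalityI[of _ "{1..k}"]) (auto simp: Tsh_def PiE_iff)
  qed
  show "Tsh k c ` {f\<in>nondec_funs k n. f m = c \<and> n \<notin> f ` {1..k}} \<subseteq> {f\<in>nondec_funs k n. f m = Suc c \<and> c \<notin> f ` {1..k}}"
  proof
    fix g assume "g \<in> Tsh k c ` {f\<in>nondec_funs k n. f m = c \<and> n \<notin> f ` {1..k}}"
    then obtain f where f: "f \<in> nondec_funs k n" "f m = c" "n \<notin> f ` {1..k}" and g: "g = Tsh k c f" by auto
    have fP: "f \<in> PiE {1..k} (\<lambda>_. {1..n})" and mo: "mono_on {1..k} f" using f by (auto simp: nondec_funs_def)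
    have "\<And>j. j \<in> {1..k} \<Longrightarrow> f j \<noteq> n" using f by auto
    then have "\<forall>j\<in>{1..k}. sh c (f j) \<in> {1..n}" using fP
      by (force simp: sh_def PiE_iff)
    then have "g \<in> PiE {1..k} (\<lambda>_. {1..n})" unfolding g Tsh_def
      by (simp add: restrict_PiE_iff)
    moreover have "mono_on {1..k} g"
    proof (rule mono_onI)
      fix r s assume rs: "r \<in> {1..k}" "s \<in> {1..k}" "r \<le> s"
      then have "f r \<le> f s" using mo by (simp add: mono_on_def)
      then show "g r \<le> g s" using rs by (simp add: g Tsh_def sh_def)
    qed
    moreover have "g m = Suc c" using m f by (simp add: g Tsh_def sh_def)
    moreover have "c \<notin> g ` {1..k}" unfolding g by (auto simp: Tsh_def sh_def)
    ultimately show "g \<in> {f\<in>nondec_funs k n. f m = Suc c \<and> c \<notin> f ` {1..k}}"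
      by (simp add: nondec_funs_def)
  qed
  show "Ush k c ` {f\<in>nondec_funs k n. f m = Suc c \<and> c \<notin> f ` {1..k}} \<subseteq> {f\<in>nondec_funs k n. f m = c \<and> n \<notin> f ` {1..k}}"
  proof
    fix g assume "g \<in> Ush k c ` {f\<in>nondec_funs k n. f m = Suc c \<and> c \<notin> f ` {1..k}}"
    then obtain f where f: "f \<in> nondec_funs k n" "f m = Suc c" "c \<notin> f ` {1..k}" and g: "g = Ush k c f" by auto
    have fP: "f \<in> PiE {1..k} (\<lambda>_. {1..n})" and mo: "mono_on {1..k} f" using f by (auto simp: nondec_funs_def)
    have fc: "\<And>j. j \<in> {1..k} \<Longrightarrow> f j \<noteq> c" using f by auto
    have "\<forall>j\<in>{1..k}. ush c (f j) \<in> {1..n}" using fP c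
      by (force simp: ush_def PiE_iff)
    then have "g \<in> PiE {1..k} (\<lambda>_. {1..n})" unfolding g Ush_def
      by (simp add: restrict_PiE_iff)
    moreover have "mono_on {1..k} g"
    proof (rule mono_onI)
      fix r s assume rs: "r \<in> {1..k}" "s \<in> {1..k}" "r \<le> s"
      then have "f r \<le> f s" using mo by (simp add: mono_on_def)
      then show "g r \<le> g s" using rs by (simp add: g Ush_def ush_def) arith
    qed
    moreover have "g m = c" using m f by (simp add: g Ush_def ush_def)
    moreover have "n \<notin> g ` {1..k}"
    proof
      assume "n \<in> g ` {1..k}"
      then obtain j where j: "j \<in> {1..k}" "g j = n" by auto
      have "f j \<in> {1..n}" using fP j by auto
      then show False using c j by (simp add: g Ush_def ush_def split: if_splits)
    qed
    ultimately show "g \<in> {f\<in>nondec_funs k n. f m = c \<and> n \<notin> f ` {1..k}}"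
      by (simp add: nondec_funs_def)
  qed
qed

lemma finite_nondec: "finite (nondec_funs k n)"
  by (rule finite_subset[of _ "PiE {1..k} (\<lambda>_. {1..n})"]) (auto simp: nondec_funs_def finite_PiE)

lemma sum_split_pred:
  assumes "finite S"
  shows "sum g S = sum g {x\<in>S. Q x} + sum g {x\<in>S. \<not> Q x}"
proof -
  have "S = {x\<in>S. Q x} \<union> {x\<in>S. \<not> Q x}" by auto
  then have "sum g S = sum g ({x\<in>S. Q x} \<union> {x\<in>S. \<not> Q x})" by simp
  also have "\<dots> = sum g {x\<in>S. Q x} + sum g {x\<in>S. \<not> Q x}"
    by (rule sum.union_disjoint) (use assms in auto)
  finally show ?thesis .
qed

lemma Phi_eq:
  fixes \<psi> :: "(nat \<Rightarrow> nat) \<Rightarrow> real"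
  assumes c: "1 \<le> c" "c < n" and m: "m \<in> {1..k}"
    and inv: "\<And>f. f \<in> nondec_funs k n \<Longrightarrow> n \<notin> f ` {1..k} \<Longrightarrow> \<psi> (Tsh k c f) = \<psi> f"
  shows "(\<Sum>f\<in>nondec_funs k n. \<psi> f * uu c (f m)) =
     (\<Sum>f\<in>{f\<in>nondec_funs k n. f m = c \<and> n \<in> f ` {1..k}}. \<psi> f) -
     (\<Sum>f\<in>{f\<in>nondec_funs k n. f m = Suc c \<and> c \<in> f ` {1..k}}. \<psi> f)"
proof -
  let ?ND = "nondec_funs k n"
  have fin: "finite ?ND" by (rule finite_nondec)
  have "(\<Sum>f\<in>?ND. \<psi> f * uu c (f m)) =
     (\<Sum>f\<in>?ND. (if f m = c then \<psi> f else 0)) - (\<Sum>f\<in>?ND. (if f m = Suc c then \<psi> f else 0))"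
    by (simp add: sum_subtractf[symmetric] uu_def, intro sum.cong) auto
  also have "\<dots> = (\<Sum>f\<in>{f\<in>?ND. f m = c}. \<psi> f) - (\<Sum>f\<in>{f\<in>?ND. f m = Suc c}. \<psi> f)"
    using fin by (simp add: sum.inter_filter)
  also have "(\<Sum>f\<in>{f\<in>?ND. f m = c}. \<psi> f) =
      (\<Sum>f\<in>{f\<in>?ND. f m = c \<and> n \<in> f ` {1..k}}. \<psi> f) + (\<Sum>f\<in>{f\<in>?ND. f m = c \<and> n \<notin> f ` {1..k}}. \<psi> f)"
    using sum_split_pred[of "{f\<in>?ND. f m = c}" \<psi> "\<lambda>f. n \<in> f ` {1..k}"] fin
    by (simp add: conj_assoc)
  also have "(\<Sum>f\<in>{f\<in>?ND. f m = Suc c}. \<psi> f) =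
      (\<Sum>f\<in>{f\<in>?ND. f m = Suc c \<and> c \<in> f ` {1..k}}. \<psi> f) + (\<Sum>f\<in>{f\<in>?ND. f m = Suc c \<and> c \<notin> f ` {1..k}}. \<psi> f)"
    using sum_split_pred[of "{f\<in>?ND. f m = Suc c}" \<psi> "\<lambda>f. c \<in> f ` {1..k}"] fin
    by (simp add: conj_assoc)
  also have "(\<Sum>f\<in>{f\<in>?ND. f m = c \<and> n \<notin> f ` {1..k}}. \<psi> f) = (\<Sum>f\<in>{f\<in>?ND. f m = c \<and> n \<notin> f ` {1..k}}. \<psi> (Tsh k c f))"
    using inv by (intro sum.cong) auto
  also have "\<dots> = (\<Sum>f\<in>{f\<in>?ND. f m = Suc c \<and> c \<notin> f ` {1..k}}. \<psi> f)"
    by (rule sum.reindex_bij_betw[OF shift_bij[OF c m]])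
  finally show ?thesis by simp
qed



lemma mono_noninj:
  fixes f :: "nat \<Rightarrow> nat"
  assumes "mono_on {1..k} f" "\<not> inj_on f {1..k}"
  shows "\<exists>j\<in>{1..k-1}. f j = f (Suc j)"
proof -
  obtain x y where xy: "x \<in> {1..k}" "y \<in> {1..k}" "x \<noteq> y" "f x = f y"
    using assms(2) unfolding inj_on_def by blast
  obtain u w where uw: "u \<in> {1..k}" "w \<in> {1..k}" "u < w" "f u = f w"
  proof (cases "x < y")
    case True then show ?thesis using that xy by blast
  next
    case False then show ?thesis using that[of y x] xy by auto
  qed
  have 1: "f u \<le> f (Suc u)" using uw by (intro mono_onD[OF assms(1)]) auto
  have 2: "f (Suc u) \<le> f w" using uw by (intro mono_onD[OF assms(1)]) auto
  have "f u = f (Suc u)" using 1 2 uw(4) by linarith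
  moreover have "u \<in> {1..k-1}" using uw by auto
  ultimately show ?thesis by blast
qed

lemma card_pin_range:
  assumes m: "m \<in> {1..k}" and cv: "c \<noteq> v"
  shows "n ^ 2 * card {f\<in>nondec_funs k n. f m = c \<and> v \<in> f ` {1..k}} \<le> k * n ^ k"
proof -
  let ?S = "\<lambda>p. {f\<in>PiE {1..k} (\<lambda>_. {1..n}). f m = c \<and> f p = v}"
  have sub: "{f\<in>nondec_funs k n. f m = c \<and> v \<in> f ` {1..k}} \<subseteq> (\<Union>p\<in>{1..k}. ?S p)"
    by (auto simp: nondec_funs_def)
  have fin: "\<And>p. finite (?S p)" by (rule finite_subset[of _ "PiE {1..k} (\<lambda>_. {1..n})"]) (auto simp: finite_PiE)
  have "card {f\<in>nondec_funs k n. f m = c \<and> v \<in> f ` {1..k}} \<le> card (\<Union>p\<in>{1..k}. ?S p)"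
    by (rule card_mono[OF _ sub]) (use fin in auto)
  also have "\<dots> \<le> (\<Sum>p\<in>{1..k}. card (?S p))" by (rule card_UN_le) simp
  finally have "n ^ 2 * card {f\<in>nondec_funs k n. f m = c \<and> v \<in> f ` {1..k}} \<le> n ^ 2 * (\<Sum>p\<in>{1..k}. card (?S p))"
    by simp
  also have "\<dots> = (\<Sum>p\<in>{1..k}. n ^ 2 * card (?S p))" by (simp add: sum_distrib_left)
  also have "\<dots> \<le> (\<Sum>p\<in>{1..k}. n ^ k)" by (rule sum_mono) (use two_pins m cv in auto)
  also have "\<dots> = k * n ^ k" by simp
  finally show ?thesis .
qed

lemma card_pin_range_ninj:
  assumes m: "m \<in> {1..k}" and cv: "c \<noteq> v"
  shows "n ^ 3 * card {f\<in>nondec_funs k n. \<not> inj_on f {1..k} \<and> f m = c \<and> v \<in> f ` {1..k}} \<le> k * k * n ^ k"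
proof -
  let ?S = "\<lambda>j p. {f\<in>PiE {1..k} (\<lambda>_. {1..n}). f m = c \<and> f p = v \<and> f j = f (Suc j)}"
  let ?L = "{f\<in>nondec_funs k n. \<not> inj_on f {1..k} \<and> f m = c \<and> v \<in> f ` {1..k}}"
  have sub: "?L \<subseteq> (\<Union>j\<in>{1..k-1}. \<Union>p\<in>{1..k}. ?S j p)"
  proof
    fix f assume f: "f \<in> ?L"
    then obtain j where j: "j \<in> {1..k-1}" "f j = f (Suc j)"
      using mono_noninj[of k f] by (auto simp: nondec_funs_def)
    show "f \<in> (\<Union>j\<in>{1..k-1}. \<Union>p\<in>{1..k}. ?S j p)" using f j by (auto simp: nondec_funs_def)
  qed
  have fin: "\<And>j p. finite (?S j p)" by (rule finite_subset[of _ "PiE {1..k} (\<lambda>_. {1..n})"]) (auto simp: finite_PiE)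
  have "card ?L \<le> card (\<Union>j\<in>{1..k-1}. \<Union>p\<in>{1..k}. ?S j p)"
    by (rule card_mono[OF _ sub]) (use fin in auto)
  also have "\<dots> \<le> (\<Sum>j\<in>{1..k-1}. card (\<Union>p\<in>{1..k}. ?S j p))" by (rule card_UN_le) simp
  also have "\<dots> \<le> (\<Sum>j\<in>{1..k-1}. \<Sum>p\<in>{1..k}. card (?S j p))"
    by (rule sum_mono) (rule card_UN_le, simp)
  finally have "n ^ 3 * card ?L \<le> n ^ 3 * (\<Sum>j\<in>{1..k-1}. \<Sum>p\<in>{1..k}. card (?S j p))"
    by simp
  also have "\<dots> = (\<Sum>j\<in>{1..k-1}. \<Sum>p\<in>{1..k}. n ^ 3 * card (?S j p))" by (simp add: sum_distrib_left)
  also have "\<dots> \<le> (\<Sum>j\<in>{1..k-1}. \<Sum>p\<in>{1..k}. n ^ k)"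
    by (intro sum_mono three_pins) (use m cv in auto)
  also have "\<dots> = (k - 1) * k * n ^ k" by simp
  also have "\<dots> \<le> k * k * n ^ k" by simp
  finally show ?thesis .
qed

definition psis :: "nat \<Rightarrow> (nat \<Rightarrow> nat) \<Rightarrow> real" where
  "psis k f = (if inj_on f {1..k} then 1 else 0)"
definition psir :: "nat \<Rightarrow> nat \<Rightarrow> (nat \<Rightarrow> nat) \<Rightarrow> real" where
  "psir k n f = (if inj_on f {1..k} then 0 else 1 / wt k n f)"

lemma wt_ge1: "wt k n f \<ge> 1"
  unfolding wt_def by (rule prod_ge_1) (simp add: fact_ge_1)

lemma wt_inj:
  assumes inj: "inj_on f {1..k}"
  shows "wt k n f = 1"
proof -
  have "\<forall>i\<in>{1..n}. fact (card {m\<in>{1..k}. f m = i}) = (1::real)"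
  proof
    fix i
    let ?S = "{m\<in>{1..k}. f m = i}"
    have fin: "finite ?S" by simp
    have "\<forall>a1\<in>?S. \<forall>a2\<in>?S. a1 = a2"
    proof (intro ballI)
      fix a1 a2 assume "a1 \<in> ?S" "a2 \<in> ?S"
      then have "a1 \<in> {1..k}" "a2 \<in> {1..k}" "f a1 = f a2" by auto
      then show "a1 = a2" using inj by (meson inj_onD)
    qed
    then have "card ?S \<le> Suc 0" by (simp only: card_le_Suc0_iff_eq[OF fin])
    then have "card ?S = 0 \<or> card ?S = 1" by linarith
    then show "fact (card ?S) = (1::real)" by (metis fact_0 fact_1)
  qed
  then show ?thesis unfolding wt_def by (rule prod.neutral)
qed

lemma weight_split: "1 / wt k n f = psis k f + psir k n f"
  by (cases "inj_on f {1..k}") (simp_all add: psis_def psir_def wt_inj)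

lemma sum_le_card_pred:
  fixes \<psi> :: "(nat \<Rightarrow> nat) \<Rightarrow> real"
  assumes "finite S" "\<And>f. f \<in> S \<Longrightarrow> \<psi> f \<le> (if P f then 1 else 0)"
  shows "sum \<psi> S \<le> real (card {f\<in>S. P f})"
proof -
  have "sum \<psi> S \<le> (\<Sum>f\<in>S. if P f then 1 else 0)" by (rule sum_mono) (use assms in auto)
  also have "\<dots> = (\<Sum>f\<in>{f\<in>S. P f}. 1)"
    by (rule sum.inter_filter[symmetric]) (rule assms(1))
  also have "\<dots> = real (card {f\<in>S. P f})" by simp
  finally show ?thesis .
qed

lemma bound_s:
  assumes c: "1 \<le> c" "c < n" and m: "m \<in> {1..k}"
  shows "real n ^ 2 * \<bar>\<Sum>f\<in>nondec_funs k n. psis k f * uu c (f m)\<bar> \<le> 2 * real k * real n ^ k"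
proof -
  let ?ND = "nondec_funs k n"
  let ?A = "{f\<in>?ND. f m = c \<and> n \<in> f ` {1..k}}"
  let ?B = "{f\<in>?ND. f m = Suc c \<and> c \<in> f ` {1..k}}"
  have inv: "\<And>f. f \<in> ?ND \<Longrightarrow> n \<notin> f ` {1..k} \<Longrightarrow> psis k (Tsh k c f) = psis k f"
    by (simp only: psis_def inj_Tsh)
  have eq: "(\<Sum>f\<in>?ND. psis k f * uu c (f m)) = sum (psis k) ?A - sum (psis k) ?B"
    by (rule Phi_eq[where \<psi>="psis k", OF c m inv])
  have finA: "finite ?A" "finite ?B" using finite_nondec by auto
  have nonneg: "0 \<le> sum (psis k) ?A" "0 \<le> sum (psis k) ?B"
    by (auto intro!: sum_nonneg simp: psis_def)
  have A: "sum (psis k) ?A \<le> real (card ?A)"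
    using sum_le_card_pred[OF finA(1), of "psis k" "\<lambda>_. True"] by (simp add: psis_def)
  have B: "sum (psis k) ?B \<le> real (card ?B)"
    using sum_le_card_pred[OF finA(2), of "psis k" "\<lambda>_. True"] by (simp add: psis_def)
  have cA: "real n ^ 2 * real (card ?A) \<le> real k * real n ^ k"
    using card_pin_range[OF m, of c n n] c by (simp flip: of_nat_mult of_nat_power)
  have cB: "real n ^ 2 * real (card ?B) \<le> real k * real n ^ k"
    using card_pin_range[OF m, of "Suc c" c n] by (simp flip: of_nat_mult of_nat_power)
  have "\<bar>sum (psis k) ?A - sum (psis k) ?B\<bar> \<le> real (card ?A) + real (card ?B)"
    using A B nonneg by linarith
  then have "real n ^ 2 * \<bar>sum (psis k) ?A - sum (psis k) ?B\<bar> \<le> real n ^ 2 * (real (card ?A) + real (card ?B))"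
    by (simp add: mult_left_mono)
  also have "\<dots> \<le> 2 * real k * real n ^ k" using cA cB by (simp add: algebra_simps)
  finally show ?thesis by (simp add: eq)
qed

lemma bound_r:
  assumes c: "1 \<le> c" "c < n" and m: "m \<in> {1..k}"
  shows "real n ^ 3 * \<bar>\<Sum>f\<in>nondec_funs k n. psir k n f * uu c (f m)\<bar> \<le> 2 * real k * real k * real n ^ k"
proof -
  let ?ND = "nondec_funs k n"
  let ?A = "{f\<in>?ND. f m = c \<and> n \<in> f ` {1..k}}"
  let ?B = "{f\<in>?ND. f m = Suc c \<and> c \<in> f ` {1..k}}"
  have inv: "\<And>f. f \<in> ?ND \<Longrightarrow> n \<notin> f ` {1..k} \<Longrightarrow> psir k n (Tsh k c f) = psir k n f"
  proof -
    fix f assume f: "f \<in> ?ND" "n \<notin> f ` {1..k}"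
    then have "f \<in> PiE {1..k} (\<lambda>_. {1..n})" by (simp add: nondec_funs_def)
    then have "wt k n (Tsh k c f) = wt k n f" using f(2) by (rule wt_Tsh)
    then show "psir k n (Tsh k c f) = psir k n f" by (simp only: psir_def inj_Tsh)
  qed
  have eq: "(\<Sum>f\<in>?ND. psir k n f * uu c (f m)) = sum (psir k n) ?A - sum (psir k n) ?B"
    by (rule Phi_eq[where \<psi>="psir k n", OF c m inv])
  have finA: "finite ?A" "finite ?B" using finite_nondec by auto
  have ps0: "0 \<le> psir k n f" for f
    using wt_ge1[of k n f] by (simp add: psir_def)
  have ps1: "psir k n f \<le> (if \<not> inj_on f {1..k} then 1 else 0)" for f
    using wt_ge1[of k n f] by (simp add: psir_def)
  note ps = ps0 ps1
  have nonneg: "0 \<le> sum (psir k n) ?A" "0 \<le> sum (psir k n) ?B"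
    by (auto intro!: sum_nonneg ps)
  have A: "sum (psir k n) ?A \<le> real (card {f\<in>?A. \<not> inj_on f {1..k}})"
    by (rule sum_le_card_pred[OF finA(1)]) (rule ps)
  have B: "sum (psir k n) ?B \<le> real (card {f\<in>?B. \<not> inj_on f {1..k}})"
    by (rule sum_le_card_pred[OF finA(2)]) (rule ps)
  have eA: "{f\<in>?A. \<not> inj_on f {1..k}} = {f\<in>?ND. \<not> inj_on f {1..k} \<and> f m = c \<and> n \<in> f ` {1..k}}" by auto
  have eB: "{f\<in>?B. \<not> inj_on f {1..k}} = {f\<in>?ND. \<not> inj_on f {1..k} \<and> f m = Suc c \<and> c \<in> f ` {1..k}}" by auto
  have cA: "real n ^ 3 * real (card {f\<in>?A. \<not> inj_on f {1..k}}) \<le> real k * real k * real n ^ k"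
    unfolding eA using card_pin_range_ninj[OF m, of c n n] c by (simp flip: of_nat_mult of_nat_power)
  have cB: "real n ^ 3 * real (card {f\<in>?B. \<not> inj_on f {1..k}}) \<le> real k * real k * real n ^ k"
    unfolding eB using card_pin_range_ninj[OF m, of "Suc c" c n] by (simp flip: of_nat_mult of_nat_power)
  have "\<bar>sum (psir k n) ?A - sum (psir k n) ?B\<bar> \<le> real (card {f\<in>?A. \<not> inj_on f {1..k}}) + real (card {f\<in>?B. \<not> inj_on f {1..k}})"
    using A B nonneg by linarith
  then have "real n ^ 3 * \<bar>sum (psir k n) ?A - sum (psir k n) ?B\<bar> \<le> real n ^ 3 * (real (card {f\<in>?A. \<not> inj_on f {1..k}}) + real (card {f\<in>?B. \<not> inj_on f {1..k}}))"
    by (simp add: mult_left_mono)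
  also have "\<dots> \<le> 2 * real k * real k * real n ^ k" using cA cB by (simp add: algebra_simps)
  finally show ?thesis by (simp add: eq)
qed



lemma deriv_prod_lin:
  fixes \<beta> :: "nat \<Rightarrow> real" and c :: real
  assumes "finite M"
  shows "((\<lambda>t. \<Prod>m\<in>M. (c + t * \<beta> m)) has_field_derivative (\<Sum>m\<in>M. \<beta> m * c ^ (card M - 1))) (at 0)"
  using assms
proof (induction M rule: finite_induct)
  case empty
  then show ?case by simp
next
  case (insert x F)
  have d1: "((\<lambda>t. c + t * \<beta> x) has_field_derivative \<beta> x) (at 0)"
    by (auto intro!: derivative_eq_intros)
  have d: "((\<lambda>t. (c + t * \<beta> x) * (\<Prod>m\<in>F. (c + t * \<beta> m))) has_field_derivative
      (\<beta> x * (\<Prod>m\<in>F. (c + 0 * \<beta> m)) + (\<Sum>m\<in>F. \<beta> m * c ^ (card F - 1)) * (c + 0 * \<beta> x))) (at 0)"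
    by (rule DERIV_mult[OF d1 insert.IH])
  have eq: "\<beta> x * (\<Prod>m\<in>F. (c + 0 * \<beta> m)) + (\<Sum>m\<in>F. \<beta> m * c ^ (card F - 1)) * (c + 0 * \<beta> x)
      = (\<Sum>m\<in>insert x F. \<beta> m * c ^ (card (insert x F) - 1))"
  proof (cases "F = {}")
    case True then show ?thesis by simp
  next
    case False
    then have "card F \<ge> 1" using insert.hyps(1) by (simp add: Suc_leI card_gt_0_iff)
    then have "c * c ^ (card F - 1) = c ^ card F" by (metis le_add_diff_inverse power_Suc plus_1_eq_Suc)
    then show ?thesis using insert.hyps
      by (simp add: sum_distrib_left algebra_simps flip: sum_distrib_right)
  qed
  have "(\<lambda>t. \<Prod>m\<in>insert x F. (c + t * \<beta> m)) = (\<lambda>t. (c + t * \<beta> x) * (\<Prod>m\<in>F. (c + t * \<beta> m)))"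
    using insert.hyps by simp
  then show ?case using DERIV_cong[OF d eq] by simp
qed

lemma Jx_X:
  assumes "a \<in> {1..n-1}" "b \<in> {1..n-1}"
  shows "Jx n (\<lambda>i j. if i = a \<and> j = b then t else 0) i j = 1 / real n + t * Bmat a b i j"
proof -
  have "(\<Sum>a'\<in>{1..n-1}. \<Sum>b'\<in>{1..n-1}. (if a' = a \<and> b' = b then t else 0) * Bmat a' b' i j)
      = (\<Sum>a'\<in>{1..n-1}. if a' = a then t * Bmat a b i j else 0)"
  proof (rule sum.cong[OF refl])
    fix a' assume "a' \<in> {1..n-1}"
    show "(\<Sum>b'\<in>{1..n-1}. (if a' = a \<and> b' = b then t else 0) * Bmat a' b' i j) = (if a' = a then t * Bmat a b i j else 0)"
    proof (cases "a' = a")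
      case True
      have "(\<Sum>b'\<in>{1..n-1}. (if a' = a \<and> b' = b then t else 0) * Bmat a' b' i j)
          = (\<Sum>b'\<in>{1..n-1}. if b' = b then t * Bmat a b i j else 0)"
        using True by (intro sum.cong) auto
      also have "\<dots> = t * Bmat a b i j" using assms(2) by (simp add: sum.delta')
      finally show ?thesis using True by simp
    qed simp
  qed
  also have "\<dots> = t * Bmat a b i j" using assms(1) by (simp add: sum.delta')
  finally show ?thesis by (simp add: Jx_def)
qed

definition Wfg :: "nat \<Rightarrow> nat \<Rightarrow> (nat \<Rightarrow> nat) \<Rightarrow> (nat \<Rightarrow> nat) \<Rightarrow> real" where
  "Wfg k n f g = 1 / (\<Prod>i\<in>{1..n}. fact (card {m\<in>{1..k}. f m = i}) * fact (card {m\<in>{1..k}. g m = i}))"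

lemma dh0_formula:
  assumes "a \<in> {1..n-1}" "b \<in> {1..n-1}"
  shows "dh0 \<pi> k n a b = fact k / real n ^ k *
     (\<Sum>f\<in>nondec_funs k n. \<Sum>g\<in>nondec_funs k n. Wfg k n f g *
        (\<Sum>m\<in>{1..k}. Bmat a b (f m) (g (\<pi> m)) * (1 / real n) ^ (k - 1)))"
proof -
  have fun_eq: "(\<lambda>t. hdens \<pi> k n (\<lambda>i j. if i = a \<and> j = b then t else 0)) =
    (\<lambda>t. fact k / real n ^ k * (\<Sum>f\<in>nondec_funs k n. \<Sum>g\<in>nondec_funs k n. Wfg k n f g *
        (\<Prod>m\<in>{1..k}. (1 / real n + t * Bmat a b (f m) (g (\<pi> m))))))"
    by (simp add: hdens_def Jx_X[OF assms] Wfg_def)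
  have "((\<lambda>t. fact k / real n ^ k * (\<Sum>f\<in>nondec_funs k n. \<Sum>g\<in>nondec_funs k n. Wfg k n f g *
        (\<Prod>m\<in>{1..k}. (1 / real n + t * Bmat a b (f m) (g (\<pi> m)))))) has_field_derivative
      fact k / real n ^ k * (\<Sum>f\<in>nondec_funs k n. \<Sum>g\<in>nondec_funs k n. Wfg k n f g *
        (\<Sum>m\<in>{1..k}. Bmat a b (f m) (g (\<pi> m)) * (1 / real n) ^ (card {1..k} - 1)))) (at 0)"
    by (intro DERIV_cmult DERIV_sum deriv_prod_lin) simp
  then show ?thesis unfolding dh0_def fun_eq by (simp add: DERIV_imp_deriv)
qed



lemma strinc_eq: "strinc_funs k n = {f\<in>nondec_funs k n. inj_on f {1..k}}"
proof -
  have "strict_mono_on {1..k} f \<longleftrightarrow> mono_on {1..k} f \<and> inj_on f {1..k}" for f :: "nat \<Rightarrow> nat"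
  proof
    assume s: "strict_mono_on {1..k} f"
    show "mono_on {1..k} f \<and> inj_on f {1..k}"
      using strict_mono_on_imp_inj_on[OF s] s by (auto simp: mono_on_def strict_mono_on_def le_less)
  next
    assume mi: "mono_on {1..k} f \<and> inj_on f {1..k}"
    show "strict_mono_on {1..k} f"
    proof (rule strict_mono_onI)
      fix r s assume rs: "r \<in> {1..k}" "s \<in> {1..k}" "r < s"
      then have "f r \<le> f s" using mi by (auto simp: mono_on_def)
      moreover have "f r \<noteq> f s" using mi rs by (metis inj_onD less_irrefl)
      ultimately show "f r < f s" by simp
    qed
  qed
  then show ?thesis by (auto simp: strinc_funs_def nondec_funs_def)
qed

lemma Wfg_split: "Wfg k n f g = (1 / wt k n f) * (1 / wt k n g)"
  by (simp add: Wfg_def wt_def prod.distrib)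

lemma Bmat_split: "Bmat a b i j = uu a i * uu b j"
  by (auto simp: Bmat_def uu_def)

lemma sum_fact3:
  fixes F G :: "'a \<Rightarrow> 'b \<Rightarrow> real"
  shows "(\<Sum>f\<in>A. \<Sum>g\<in>B. \<Sum>m\<in>M. F f m * G g m) = (\<Sum>m\<in>M. (\<Sum>f\<in>A. F f m) * (\<Sum>g\<in>B. G g m))"
proof -
  have "(\<Sum>m\<in>M. (\<Sum>f\<in>A. F f m) * (\<Sum>g\<in>B. G g m)) = (\<Sum>m\<in>M. \<Sum>f\<in>A. \<Sum>g\<in>B. F f m * G g m)"
    by (simp add: sum_product)
  also have "\<dots> = (\<Sum>f\<in>A. \<Sum>m\<in>M. \<Sum>g\<in>B. F f m * G g m)" by (rule sum.swap)
  also have "\<dots> = (\<Sum>f\<in>A. \<Sum>g\<in>B. \<Sum>m\<in>M. F f m * G g m)" by (simp add: sum.swap[of _ M])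
  finally show ?thesis by simp
qed

definition kap :: "nat \<Rightarrow> nat \<Rightarrow> real" where
  "kap k n = fact k * real n ^ 4 / (real n ^ k)^2"

lemma kap_powi:
  assumes "n > 0"
  shows "fact k / (real n powi (2 * int k - 4)) = kap k n"
proof -
  have "real n powi (2 * int k) = real n powi (2 * int k - 4) * real n powi 4"
    using assms by (subst power_int_add[symmetric]) auto
  moreover have "real n powi (2 * int k) = (real n ^ k)^2"
    by (metis of_nat_mult power_int_of_nat power_mult power_mult_distrib mult.commute of_nat_numeral)
  ultimately have "real n powi (2 * int k - 4) = (real n ^ k)^2 / real n ^ 4"
    using assms by (simp add: field_simps)
  then show ?thesis using assms by (simp add: kap_def)
qed

lemma LHS_formula:
  assumes ab: "a \<in> {1..n-1}" "b \<in> {1..n-1}"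
  shows "real n ^ 3 * dh0 \<pi> k n a b = kap k n *
     (\<Sum>m\<in>{1..k}. (\<Sum>f\<in>nondec_funs k n. (1 / wt k n f) * uu a (f m)) *
                  (\<Sum>g\<in>nondec_funs k n. (1 / wt k n g) * uu b (g (\<pi> m))))"
proof -
  have n: "n > 0" using ab by auto
  let ?S = "\<Sum>m\<in>{1..k}. (\<Sum>f\<in>nondec_funs k n. (1 / wt k n f) * uu a (f m)) *
                  (\<Sum>g\<in>nondec_funs k n. (1 / wt k n g) * uu b (g (\<pi> m)))"
  have "(\<Sum>f\<in>nondec_funs k n. \<Sum>g\<in>nondec_funs k n. Wfg k n f g *
        (\<Sum>m\<in>{1..k}. Bmat a b (f m) (g (\<pi> m)) * (1 / real n) ^ (k - 1)))
     = (1 / real n) ^ (k - 1) * (\<Sum>f\<in>nondec_funs k n. \<Sum>g\<in>nondec_funs k n. \<Sum>m\<in>{1..k}.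
          ((1 / wt k n f) * uu a (f m)) * ((1 / wt k n g) * uu b (g (\<pi> m))))"
    by (simp add: sum_distrib_left Wfg_split Bmat_split algebra_simps)
  also have "\<dots> = (1 / real n) ^ (k - 1) * ?S" by (simp only: sum_fact3)
  finally have eq: "real n ^ 3 * dh0 \<pi> k n a b = real n ^ 3 * (fact k / real n ^ k) * (1 / real n) ^ (k - 1) * ?S"
    by (simp add: dh0_formula[OF ab])
  show ?thesis
  proof (cases "k = 0")
    case True then show ?thesis using eq by simp
  next
    case False
    then have "real n ^ k = real n * real n ^ (k - 1)" by (metis Suc_pred' neq0_conv power_Suc)
    then have "real n ^ 3 * (fact k / real n ^ k) * (1 / real n) ^ (k - 1) = kap k n"
      using n by (simp add: kap_def power_one_over field_simps power2_eq_square) (simp add: eval_nat_numeral)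
    then show ?thesis by (simp add: eq)
  qed
qed

lemma RHS_formula:
  shows "(\<Sum>f\<in>strinc_funs k n. \<Sum>g\<in>strinc_funs k n. \<Sum>m\<in>{1..k}. Bmat a b (f m) (g (\<pi> m))) =
     (\<Sum>m\<in>{1..k}. (\<Sum>f\<in>nondec_funs k n. psis k f * uu a (f m)) *
                  (\<Sum>g\<in>nondec_funs k n. psis k g * uu b (g (\<pi> m))))"
proof -
  have e: "(\<Sum>f\<in>strinc_funs k n. h f) = (\<Sum>f\<in>nondec_funs k n. psis k f * h f)" for h :: "(nat \<Rightarrow> nat) \<Rightarrow> real"
  proof -
    have "(\<Sum>f\<in>strinc_funs k n. h f) = (\<Sum>f\<in>nondec_funs k n. if inj_on f {1..k} then h f else 0)"
      unfolding strinc_eq by (rule sum.inter_filter[OF finite_nondec])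
    also have "\<dots> = (\<Sum>f\<in>nondec_funs k n. psis k f * h f)"
      by (rule sum.cong) (auto simp: psis_def)
    finally show ?thesis .
  qed
  have "(\<Sum>f\<in>strinc_funs k n. \<Sum>g\<in>strinc_funs k n. \<Sum>m\<in>{1..k}. Bmat a b (f m) (g (\<pi> m))) =
     (\<Sum>f\<in>nondec_funs k n. \<Sum>g\<in>nondec_funs k n. \<Sum>m\<in>{1..k}. (psis k f * uu a (f m)) * (psis k g * uu b (g (\<pi> m))))"
    by (simp only: e Bmat_split) (simp add: sum_distrib_left algebra_simps)
  then show ?thesis by (simp only: sum_fact3)
qed



lemma prod_bound:
  fixes xs xr ys yr n A B P :: real
  assumes n: "n \<ge> 1" and nn: "A \<ge> 0" "B \<ge> 0" "P \<ge> 0"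
    and b1: "n^2 * \<bar>xs\<bar> \<le> A * P" and b2: "n^3 * \<bar>xr\<bar> \<le> B * P"
    and b3: "n^2 * \<bar>ys\<bar> \<le> A * P" and b4: "n^3 * \<bar>yr\<bar> \<le> B * P"
  shows "n^5 * \<bar>(xs + xr) * (ys + yr) - xs * ys\<bar> \<le> (2 * A * B + B^2) * P^2"
proof -
  have e: "(xs + xr) * (ys + yr) - xs * ys = xs * yr + xr * ys + xr * yr" by (simp add: algebra_simps)
  have h1: "n^5 * \<bar>xs * yr\<bar> \<le> (A * P) * (B * P)"
  proof -
    have "n^5 * \<bar>xs * yr\<bar> = (n^2 * \<bar>xs\<bar>) * (n^3 * \<bar>yr\<bar>)" by (simp add: abs_mult eval_nat_numeral algebra_simps)
    also have "\<dots> \<le> (A * P) * (B * P)" by (rule mult_mono[OF b1 b4]) (use n nn in auto)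
    finally show ?thesis .
  qed
  have h2: "n^5 * \<bar>xr * ys\<bar> \<le> (B * P) * (A * P)"
  proof -
    have "n^5 * \<bar>xr * ys\<bar> = (n^3 * \<bar>xr\<bar>) * (n^2 * \<bar>ys\<bar>)" by (simp add: abs_mult eval_nat_numeral algebra_simps)
    also have "\<dots> \<le> (B * P) * (A * P)" by (rule mult_mono[OF b2 b3]) (use n nn in auto)
    finally show ?thesis .
  qed
  have h3: "n^5 * \<bar>xr * yr\<bar> \<le> (B * P) * (B * P)"
  proof -
    have x0: "0 \<le> n^5 * \<bar>xr * yr\<bar>" using n by simp
    have "n^5 * \<bar>xr * yr\<bar> \<le> n * (n^5 * \<bar>xr * yr\<bar>)" using mult_right_mono[OF n x0] by simp
    also have "\<dots> = (n^3 * \<bar>xr\<bar>) * (n^3 * \<bar>yr\<bar>)" by (simp add: abs_mult eval_nat_numeral algebra_simps)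
    also have "\<dots> \<le> (B * P) * (B * P)" by (rule mult_mono[OF b2 b4]) (use n nn in auto)
    finally show ?thesis .
  qed
  have "n^5 * \<bar>xs * yr + xr * ys + xr * yr\<bar> \<le> n^5 * \<bar>xs * yr\<bar> + n^5 * \<bar>xr * ys\<bar> + n^5 * \<bar>xr * yr\<bar>"
  proof -
    have "\<bar>xs * yr + xr * ys + xr * yr\<bar> \<le> \<bar>xs * yr\<bar> + \<bar>xr * ys\<bar> + \<bar>xr * yr\<bar>" by (rule order_trans[OF abs_triangle_ineq]) (simp add: abs_triangle_ineq)
    then show ?thesis using n by (simp add: distrib_left[symmetric] mult_left_mono)
  qed
  also have "\<dots> \<le> (A * P) * (B * P) + (B * P) * (A * P) + (B * P) * (B * P)" using h1 h2 h3 by linarith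
  also have "\<dots> = (2 * A * B + B^2) * P^2" by (simp add: algebra_simps power2_eq_square)
  finally show ?thesis using e by simp
qed

lemma floor_in:
  assumes "0 < \<alpha>" "\<alpha> < 1" "1 \<le> \<alpha> * real n"
  shows "nat \<lfloor>\<alpha> * real n\<rfloor> \<in> {1..n-1}"
proof -
  have f1: "1 \<le> \<lfloor>\<alpha> * real n\<rfloor>" using assms(3) by (simp add: le_floor_iff)
  have "\<alpha> * real n < real n" using assms by (metis mult_strict_right_mono mult_1 not_le mult_le_0_iff zero_less_one less_le_not_le order.trans of_nat_0_le_iff)
  then have "\<lfloor>\<alpha> * real n\<rfloor> < int n" by linarith
  have g: "\<And>z::int. 1 \<le> z \<Longrightarrow> z < int n \<Longrightarrow> nat z \<in> {1..n-1}" by auto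
  with f1 show ?thesis using \<open>\<lfloor>\<alpha> * real n\<rfloor> < int n\<close> by blast
qed

lemma eventually_floor_in:
  assumes "0 < \<alpha>" "\<alpha> < 1"
  shows "eventually (\<lambda>n. nat \<lfloor>\<alpha> * real n\<rfloor> \<in> {1..n-1}) sequentially"
proof -
  obtain N :: nat where N: "1 / \<alpha> < real N" using reals_Archimedean2 by blast
  have "nat \<lfloor>\<alpha> * real n\<rfloor> \<in> {1..n-1}" if "n \<ge> N" for n
  proof (rule floor_in[OF assms])
    have "1 / \<alpha> < real n" using N that by (meson le_less_trans not_le of_nat_le_iff)
    then show "1 \<le> \<alpha> * real n" using assms(1) by (simp add: field_simps)
  qed
  then show ?thesis by (auto simp: eventually_sequentially)
qed



lemma main_diff_bound:
  assumes \<pi>: "bij_betw \<pi> {1..k} {1..k}"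
    and ab: "a \<in> {1..n-1}" "b \<in> {1..n-1}"
  shows "\<bar>real n ^ 3 * dh0 \<pi> k n a b - fact k / (real n powi (2 * int k - 4)) *
           (\<Sum>f\<in>strinc_funs k n. \<Sum>g\<in>strinc_funs k n. \<Sum>m\<in>{1..k}. Bmat a b (f m) (g (\<pi> m)))\<bar>
         \<le> fact k * real k * (2 * (2 * real k) * (2 * real k * real k) + (2 * real k * real k)^2) / real n"
proof -
  define A where "A = 2 * real k"
  define B where "B = 2 * real k * real k"
  define P where "P = real n ^ k"
  have n: "n > 0" "real n \<ge> 1" using ab by auto
  have P0: "P > 0" using n by (simp add: P_def)
  define Us where "Us m = (\<Sum>f\<in>nondec_funs k n. psis k f * uu a (f m))" for m
  define Ur where "Ur m = (\<Sum>f\<in>nondec_funs k n. psir k n f * uu a (f m))" for m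
  define Vs where "Vs m = (\<Sum>f\<in>nondec_funs k n. psis k f * uu b (f m))" for m
  define Vr where "Vr m = (\<Sum>f\<in>nondec_funs k n. psir k n f * uu b (f m))" for m
  have aa: "1 \<le> a" "a < n" and bb: "1 \<le> b" "b < n" using ab by auto
  have U: "(\<Sum>f\<in>nondec_funs k n. (1 / wt k n f) * uu a (f m)) = Us m + Ur m" for m
    by (simp add: Us_def Ur_def weight_split algebra_simps sum.distrib)
  have V: "(\<Sum>f\<in>nondec_funs k n. (1 / wt k n f) * uu b (f m)) = Vs m + Vr m" for m
    by (simp add: Vs_def Vr_def weight_split algebra_simps sum.distrib)
  have L: "real n ^ 3 * dh0 \<pi> k n a b = kap k n * (\<Sum>m\<in>{1..k}. (Us m + Ur m) * (Vs (\<pi> m) + Vr (\<pi> m)))"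
    using LHS_formula[OF ab, of \<pi> k] by (simp only: U V)
  have R: "fact k / (real n powi (2 * int k - 4)) *
           (\<Sum>f\<in>strinc_funs k n. \<Sum>g\<in>strinc_funs k n. \<Sum>m\<in>{1..k}. Bmat a b (f m) (g (\<pi> m)))
        = kap k n * (\<Sum>m\<in>{1..k}. Us m * Vs (\<pi> m))"
    by (simp only: kap_powi[OF n(1)] RHS_formula Us_def Vs_def)
  have D: "real n ^ 3 * dh0 \<pi> k n a b - fact k / (real n powi (2 * int k - 4)) *
           (\<Sum>f\<in>strinc_funs k n. \<Sum>g\<in>strinc_funs k n. \<Sum>m\<in>{1..k}. Bmat a b (f m) (g (\<pi> m)))
        = kap k n * (\<Sum>m\<in>{1..k}. (Us m + Ur m) * (Vs (\<pi> m) + Vr (\<pi> m)) - Us m * Vs (\<pi> m))"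
    unfolding L R by (simp add: sum_subtractf right_diff_distrib)
  have kap0: "kap k n \<ge> 0" by (simp add: kap_def)
  have each: "real n ^ 5 * \<bar>(Us m + Ur m) * (Vs (\<pi> m) + Vr (\<pi> m)) - Us m * Vs (\<pi> m)\<bar>
      \<le> (2 * A * B + B^2) * P^2" if m: "m \<in> {1..k}" for m
  proof -
    have pm: "\<pi> m \<in> {1..k}" using \<pi> m by (auto simp: bij_betw_def)
    show ?thesis
    proof (rule prod_bound[OF n(2)])
      show "real n ^ 2 * \<bar>Us m\<bar> \<le> A * P" unfolding Us_def A_def P_def using bound_s[OF aa m] by simp
      show "real n ^ 3 * \<bar>Ur m\<bar> \<le> B * P" unfolding Ur_def B_def P_def using bound_r[OF aa m] by simp
      show "real n ^ 2 * \<bar>Vs (\<pi> m)\<bar> \<le> A * P" unfolding Vs_def A_def P_def using bound_s[OF bb pm] by simp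
      show "real n ^ 3 * \<bar>Vr (\<pi> m)\<bar> \<le> B * P" unfolding Vr_def B_def P_def using bound_r[OF bb pm] by simp
    qed (use P0 in \<open>auto simp: A_def B_def\<close>)
  qed
  define S where "S = (\<Sum>m\<in>{1..k}. \<bar>(Us m + Ur m) * (Vs (\<pi> m) + Vr (\<pi> m)) - Us m * Vs (\<pi> m)\<bar>)"
  have S: "real n ^ 5 * S \<le> real k * ((2 * A * B + B^2) * P^2)"
  proof -
    have "real n ^ 5 * S = (\<Sum>m\<in>{1..k}. real n ^ 5 * \<bar>(Us m + Ur m) * (Vs (\<pi> m) + Vr (\<pi> m)) - Us m * Vs (\<pi> m)\<bar>)"
      by (simp add: S_def sum_distrib_left)
    also have "\<dots> \<le> (\<Sum>m\<in>{1..k}. (2 * A * B + B^2) * P^2)" by (rule sum_mono) (rule each)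
    also have "\<dots> = real k * ((2 * A * B + B^2) * P^2)" by simp
    finally show ?thesis .
  qed
  have "\<bar>kap k n * (\<Sum>m\<in>{1..k}. (Us m + Ur m) * (Vs (\<pi> m) + Vr (\<pi> m)) - Us m * Vs (\<pi> m))\<bar> \<le> kap k n * S"
    unfolding S_def abs_mult abs_of_nonneg[OF kap0] by (intro mult_left_mono sum_abs kap0)
  also have "kap k n * S = fact k * (real n ^ 5 * S) / (P^2 * real n)"
    using n by (simp add: kap_def P_def field_simps eval_nat_numeral)
  also have "\<dots> \<le> fact k * (real k * ((2 * A * B + B^2) * P^2)) / (P^2 * real n)"
    using S P0 n by (intro divide_right_mono mult_left_mono) auto
  also have "\<dots> = fact k * real k * (2 * A * B + B^2) / real n"
    using P0 n by (simp add: field_simps)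
  finally show ?thesis unfolding D A_def B_def .
qed

theorem lemma4:
  fixes \<pi> :: "nat \<Rightarrow> nat" and k :: nat and \<alpha> \<beta> :: real
  assumes "bij_betw \<pi> {1..k} {1..k}"
    and "0 < \<alpha>" "\<alpha> < 1" "0 < \<beta>" "\<beta> < 1"
  shows "\<forall>L. ((\<lambda>n. real n ^ 3 * dh0 \<pi> k n (nat \<lfloor>\<alpha> * real n\<rfloor>) (nat \<lfloor>\<beta> * real n\<rfloor>))
                  \<longlonglongrightarrow> L)
          \<longleftrightarrow> ((\<lambda>n. fact k / (real n powi (2 * int k - 4)) *
                  (\<Sum>f\<in>strinc_funs k n. \<Sum>g\<in>strinc_funs k n. \<Sum>m\<in>{1..k}.
                     Bmat (nat \<lfloor>\<alpha> * real n\<rfloor>) (nat \<lfloor>\<beta> * real n\<rfloor>) (f m) (g (\<pi> m))))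
                  \<longlonglongrightarrow> L)"
proof -
  define Lf where "Lf n = real n ^ 3 * dh0 \<pi> k n (nat \<lfloor>\<alpha> * real n\<rfloor>) (nat \<lfloor>\<beta> * real n\<rfloor>)" for n
  define Rf where "Rf n = fact k / (real n powi (2 * int k - 4)) *
                  (\<Sum>f\<in>strinc_funs k n. \<Sum>g\<in>strinc_funs k n. \<Sum>m\<in>{1..k}.
                     Bmat (nat \<lfloor>\<alpha> * real n\<rfloor>) (nat \<lfloor>\<beta> * real n\<rfloor>) (f m) (g (\<pi> m)))" for n
  define C where "C = fact k * real k * (2 * (2 * real k) * (2 * real k * real k) + (2 * real k * real k)^2)"
  have pt: "norm (Lf n - Rf n) \<le> C / real n"
    if "nat \<lfloor>\<alpha> * real n\<rfloor> \<in> {1..n-1} \<and> nat \<lfloor>\<beta> * real n\<rfloor> \<in> {1..n-1}" for n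
    using main_diff_bound[OF assms(1), of "nat \<lfloor>\<alpha> * real n\<rfloor>" n "nat \<lfloor>\<beta> * real n\<rfloor>"] that
    unfolding Lf_def Rf_def C_def real_norm_def by blast
  have ev: "eventually (\<lambda>n. norm (Lf n - Rf n) \<le> C / real n) sequentially"
    by (rule eventually_mono[OF eventually_conj[OF eventually_floor_in[OF assms(2,3)] eventually_floor_in[OF assms(4,5)]] pt])
  have D0: "(\<lambda>n. Lf n - Rf n) \<longlonglongrightarrow> 0"
    by (rule Lim_null_comparison[OF ev]) (rule lim_const_over_n)
  have main: "\<forall>L. (Lf \<longlonglongrightarrow> L) \<longleftrightarrow> (Rf \<longlonglongrightarrow> L)"
  proof (intro allI iffI)
    fix L assume "Lf \<longlonglongrightarrow> L"
    then have "(\<lambda>n. Lf n - (Lf n - Rf n)) \<longlonglongrightarrow> L - 0" by (intro tendsto_diff D0)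
    then show "Rf \<longlonglongrightarrow> L" by simp
  next
    fix L assume "Rf \<longlonglongrightarrow> L"
    then have "(\<lambda>n. Rf n + (Lf n - Rf n)) \<longlonglongrightarrow> L + 0" by (intro tendsto_add D0)
    then show "Lf \<longlonglongrightarrow> L" by simp
  qed
  have eL: "Lf = (\<lambda>n. real n ^ 3 * dh0 \<pi> k n (nat \<lfloor>\<alpha> * real n\<rfloor>) (nat \<lfloor>\<beta> * real n\<rfloor>))"
    by (simp add: Lf_def fun_eq_iff)
  have eR: "Rf = (\<lambda>n. fact k / (real n powi (2 * int k - 4)) *
                  (\<Sum>f\<in>strinc_funs k n. \<Sum>g\<in>strinc_funs k n. \<Sum>m\<in>{1..k}.
                     Bmat (nat \<lfloor>\<alpha> * real n\<rfloor>) (nat \<lfloor>\<beta> * real n\<rfloor>) (f m) (g (\<pi> m))))"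
    by (simp add: Rf_def fun_eq_iff)
  show ?thesis using main unfolding eL eR .
qed


end
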